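(* Let $(H,\mu_H,\Delta_H,\alpha_H)$ be a Hom-bialgebra and $(A,\mu_A,\alpha_A)$ a left $H$-module Hom-algebra with action $h\otimes a\mapsto h\cdot a$, and assume $\alpha_H$ and $\alpha_A$ are bijective. Define $R:H\otimes A\to A\otimes H$ by $R(h\otimes a)=\alpha_H^{-2}(h_1)\cdot\alpha_A^{-1}(a)\otimes\alpha_H^{-1}(h_2)$. Then $R$ is a Hom-twisting map between $A$ and $H$. Consequently $A\# H:=A\otimes_R H$ is a Hom-associative algebra with structure map $\alpha_A\otimes\alpha_H$ and multiplication $(a\# h)(a'\# h')=a(\alpha_H^{-2}(h_1)\cdot\alpha_A^{-1}(a'))\#\alpha_H^{-1}(h_2)h'$.
   Context: Algebras/coalgebras over a field $k$, not assumed (co)unital; $\Delta(h)=h_1\otimes h_2$ (Sweedler notation). A Hom-associative algebra is $(A,\mu,\alpha)$ with $\alpha(aa')=\alpha(a)\alpha(a')$, $\alpha(a)(a'a'')=(aa')\alpha(a'')$. A Hom-bialgebra is $(H,\mu,\Delta,\alpha)$ with $(H,\mu,\alpha)$ Hom-associative and $\Delta:H\to H\otimes H$ linear such that $\Delta(h_1)\otimes\alpha(h_2)=\alpha(h_1)\otimes\Delta(h_2)$, $\Delta(hh')=h_1h'_1\otimes h_2h'_2$, $\Delta(\alpha(h))=\alpha(h_1)\otimes\alpha(h_2)$. A left $H$-module Hom-algebra is a Hom-associative algebra $(A,\mu_A,\alpha_A)$ with a linear map $H\otimes A\to A$, $h\otimes a\mapsto h\cdot a$, such that $\alpha_A(h\cdot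 a)=\alpha_H(h)\cdot\alpha_A(a)$, $\alpha_H(h)\cdot(h'\cdot a)=(hh')\cdot\alpha_A(a)$, and $\alpha_H^2(h)\cdot(aa')=(h_1\cdot a)(h_2\cdot a')$. For Hom-associative algebras $(A,\mu_A,\alpha_A),(B,\mu_B,\alpha_B)$, a Hom-twisting map is a linear $R:B\otimes A\to A\otimes B$ with $(\alpha_A\otimes\alpha_B)\circ R=R\circ(\alpha_B\otimes\alpha_A)$, $R\circ(\alpha_B\otimes\mu_A)=(\mu_A\otimes\alpha_B)\circ(\mathrm{id}_A\otimes R)\circ(R\otimes\mathrm{id}_A)$, $R\circ(\mu_B\otimes\alpha_A)=(\alpha_A\otimes\mu_B)\circ(R\otimes\mathrm{id}_B)\circ(\mathrm{id}_B\otimes R)$; $A\otimes_RB$ is $A\otimes B$ with product $(\mu_A\otimes\mu_B)\circ(\mathrm{id}_A\otimes R\otimes\mathrm{id}_B)$ and structure map $\alpha_A\otimes\alpha_B$ (a Hom-associative algebra). $a\# h$ denotes $a\otimes h$. *)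

theory Defs
  imports Complex_Main
begin

text \<open>Tensor products are not available in the
  library; an element of X (x) Y is represented by a finite list of pairs [(x1,y1),...]
  standing for the sum x1 (x) y1 + ... (scalars are absorbed into the first factor), and two
  such representatives are identified iff every bilinear form X x Y -> k takes the same
  value on them (over a field this is exactly equality in X (x) Y).  Likewise for triple
  tensors with trilinear forms.\<close>

definition lin :: "('k::field \<Rightarrow> 'x::ab_group_add \<Rightarrow> 'x) \<Rightarrow> ('k \<Rightarrow> 'y::ab_group_add \<Rightarrow> 'y)
    \<Rightarrow> ('x \<Rightarrow> 'y) \<Rightarrow> bool" where
  "lin sX sY f \<longleftrightarrow> (\<forall>c x x'. f (sX c x + x') = sY c (f x) + f x')"

definition bilin :: "('k::field \<Rightarrow> 'x::ab_group_add \<Rightarrow> 'x) \<Rightarrow> ('k \<Rightarrow> 'y::ab_group_add \<Rightarrow> 'y)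
    \<Rightarrow> ('k \<Rightarrow> 'z::ab_group_add \<Rightarrow> 'z) \<Rightarrow> ('x \<Rightarrow> 'y \<Rightarrow> 'z) \<Rightarrow> bool" where
  "bilin sX sY sZ f \<longleftrightarrow> (\<forall>y. lin sX sZ (\<lambda>x. f x y)) \<and> (\<forall>x. lin sY sZ (f x))"

definition trilin :: "('k::field \<Rightarrow> 'x::ab_group_add \<Rightarrow> 'x) \<Rightarrow> ('k \<Rightarrow> 'y::ab_group_add \<Rightarrow> 'y)
    \<Rightarrow> ('k \<Rightarrow> 'z::ab_group_add \<Rightarrow> 'z) \<Rightarrow> ('x \<Rightarrow> 'y \<Rightarrow> 'z \<Rightarrow> 'k) \<Rightarrow> bool" where
  "trilin sX sY sZ f \<longleftrightarrow> (\<forall>y z. lin sX (*) (\<lambda>x. f x y z)) \<and> (\<forall>x z. lin sY (*) (\<lambda>y. f x y z))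
      \<and> (\<forall>x y. lin sZ (*) (\<lambda>z. f x y z))"

definition teq2 :: "('k::field \<Rightarrow> 'x::ab_group_add \<Rightarrow> 'x) \<Rightarrow> ('k \<Rightarrow> 'y::ab_group_add \<Rightarrow> 'y)
    \<Rightarrow> ('x \<times> 'y) list \<Rightarrow> ('x \<times> 'y) list \<Rightarrow> bool" where
  "teq2 sX sY xs ys \<longleftrightarrow> (\<forall>\<phi>. bilin sX sY (*) \<phi> \<longrightarrow>
      sum_list (map (\<lambda>(x,y). \<phi> x y) xs) = sum_list (map (\<lambda>(x,y). \<phi> x y) ys))"

definition teq3 :: "('k::field \<Rightarrow> 'x::ab_group_add \<Rightarrow> 'x) \<Rightarrow> ('k \<Rightarrow> 'y::ab_group_add \<Rightarrow> 'y)
    \<Rightarrow> ('k \<Rightarrow> 'z::ab_group_add \<Rightarrow> 'z)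
    \<Rightarrow> ('x \<times> 'y \<times> 'z) list \<Rightarrow> ('x \<times> 'y \<times> 'z) list \<Rightarrow> bool" where
  "teq3 sX sY sZ xs ys \<longleftrightarrow> (\<forall>\<phi>. trilin sX sY sZ \<phi> \<longrightarrow>
      sum_list (map (\<lambda>(x,y,z). \<phi> x y z) xs) = sum_list (map (\<lambda>(x,y,z). \<phi> x y z) ys))"

definition tscale :: "('k \<Rightarrow> 'x \<Rightarrow> 'x) \<Rightarrow> 'k \<Rightarrow> ('x \<times> 'y) list \<Rightarrow> ('x \<times> 'y) list" where
  "tscale sX c xs = map (\<lambda>(x,y). (sX c x, y)) xs"

definition hom_assoc_alg :: "('k::field \<Rightarrow> 'a::ab_group_add \<Rightarrow> 'a) \<Rightarrow> ('a \<Rightarrow> 'a \<Rightarrow> 'a)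
    \<Rightarrow> ('a \<Rightarrow> 'a) \<Rightarrow> bool" where
  "hom_assoc_alg s m \<alpha> \<longleftrightarrow> vector_space s \<and> bilin s s s m \<and> lin s s \<alpha>
     \<and> (\<forall>a a'. \<alpha> (m a a') = m (\<alpha> a) (\<alpha> a'))
     \<and> (\<forall>a a' a''. m (\<alpha> a) (m a' a'') = m (m a a') (\<alpha> a''))"

definition hom_bialg :: "('k::field \<Rightarrow> 'h::ab_group_add \<Rightarrow> 'h) \<Rightarrow> ('h \<Rightarrow> 'h \<Rightarrow> 'h)
    \<Rightarrow> ('h \<Rightarrow> ('h \<times> 'h) list) \<Rightarrow> ('h \<Rightarrow> 'h) \<Rightarrow> bool" where
  "hom_bialg s m \<Delta> \<alpha> \<longleftrightarrow> hom_assoc_alg s m \<alpha>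
     \<and> (\<forall>c h h'. teq2 s s (\<Delta> (s c h + h')) (tscale s c (\<Delta> h) @ \<Delta> h'))
     \<and> (\<forall>h. teq3 s s s [(u, v, \<alpha> y). (x,y) \<leftarrow> \<Delta> h, (u,v) \<leftarrow> \<Delta> x]
                      [(\<alpha> x, u, v). (x,y) \<leftarrow> \<Delta> h, (u,v) \<leftarrow> \<Delta> y])
     \<and> (\<forall>h h'. teq2 s s (\<Delta> (m h h')) [(m x x', m y y'). (x,y) \<leftarrow> \<Delta> h, (x',y') \<leftarrow> \<Delta> h'])
     \<and> (\<forall>h. teq2 s s (\<Delta> (\<alpha> h)) [(\<alpha> x, \<alpha> y). (x,y) \<leftarrow> \<Delta> h])"

definition module_hom_alg :: "('k::field \<Rightarrow> 'h::ab_group_add \<Rightarrow> 'h) \<Rightarrow> ('h \<Rightarrow> 'h \<Rightarrow> 'h)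
    \<Rightarrow> ('h \<Rightarrow> ('h \<times> 'h) list) \<Rightarrow> ('h \<Rightarrow> 'h)
    \<Rightarrow> ('k \<Rightarrow> 'a::ab_group_add \<Rightarrow> 'a) \<Rightarrow> ('a \<Rightarrow> 'a \<Rightarrow> 'a) \<Rightarrow> ('a \<Rightarrow> 'a)
    \<Rightarrow> ('h \<Rightarrow> 'a \<Rightarrow> 'a) \<Rightarrow> bool" where
  "module_hom_alg sH mH \<Delta> \<alpha>H sA mA \<alpha>A act \<longleftrightarrow> hom_assoc_alg sA mA \<alpha>A
     \<and> bilin sH sA sA act
     \<and> (\<forall>h a. \<alpha>A (act h a) = act (\<alpha>H h) (\<alpha>A a))
     \<and> (\<forall>h h' a. act (\<alpha>H h) (act h' a) = act (mH h h') (\<alpha>A a))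
     \<and> (\<forall>h a a'. act (\<alpha>H (\<alpha>H h)) (mA a a') =
                 sum_list (map (\<lambda>(x,y). mA (act x a) (act y a')) (\<Delta> h)))"

text \<open>Hom-twisting map R : B (x) A -> A (x) B, given on pure tensors (R b a represents
  R(b (x) a)); it is required to be bilinear, i.e. to induce a linear map on B (x) A.
  The identities of linear maps on B (x) A (x) A resp. B (x) B (x) A are stated on pure
  tensors, which span.\<close>
definition hom_twisting :: "('k::field \<Rightarrow> 'a::ab_group_add \<Rightarrow> 'a) \<Rightarrow> ('a \<Rightarrow> 'a \<Rightarrow> 'a) \<Rightarrow> ('a \<Rightarrow> 'a)
    \<Rightarrow> ('k \<Rightarrow> 'b::ab_group_add \<Rightarrow> 'b) \<Rightarrow> ('b \<Rightarrow> 'b \<Rightarrow> 'b) \<Rightarrow> ('b \<Rightarrow> 'b)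
    \<Rightarrow> ('b \<Rightarrow> 'a \<Rightarrow> ('a \<times> 'b) list) \<Rightarrow> bool" where
  "hom_twisting sA mA \<alpha>A sB mB \<alpha>B R \<longleftrightarrow>
     (\<forall>c b b' a. teq2 sA sB (R (sB c b + b') a) (tscale sA c (R b a) @ R b' a))
   \<and> (\<forall>c b a a'. teq2 sA sB (R b (sA c a + a')) (tscale sA c (R b a) @ R b a'))
   \<and> (\<forall>b a. teq2 sA sB [(\<alpha>A x, \<alpha>B y). (x,y) \<leftarrow> R b a] (R (\<alpha>B b) (\<alpha>A a)))
   \<and> (\<forall>b a a'. teq2 sA sB (R (\<alpha>B b) (mA a a'))
                 [(mA x u, \<alpha>B v). (x,y) \<leftarrow> R b a, (u,v) \<leftarrow> R y a'])
   \<and> (\<forall>b b' a. teq2 sA sB (R (mB b b') (\<alpha>A a))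
                 [(\<alpha>A x, mB y v). (u,v) \<leftarrow> R b' a, (x,y) \<leftarrow> R b u])"

definition twisted_mult :: "('a \<Rightarrow> 'a \<Rightarrow> 'a) \<Rightarrow> ('b \<Rightarrow> 'b \<Rightarrow> 'b) \<Rightarrow> ('b \<Rightarrow> 'a \<Rightarrow> ('a \<times> 'b) list)
    \<Rightarrow> ('a \<times> 'b) list \<Rightarrow> ('a \<times> 'b) list \<Rightarrow> ('a \<times> 'b) list" where
  "twisted_mult mA mB R xs ys = [(mA a x, mB y b'). (a,b) \<leftarrow> xs, (a',b') \<leftarrow> ys, (x,y) \<leftarrow> R b a']"

definition hom_assoc_tensor_alg :: "('k::field \<Rightarrow> 'x::ab_group_add \<Rightarrow> 'x) \<Rightarrow> ('k \<Rightarrow> 'y::ab_group_add \<Rightarrow> 'y)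
    \<Rightarrow> (('x \<times> 'y) list \<Rightarrow> ('x \<times> 'y) list \<Rightarrow> ('x \<times> 'y) list) \<Rightarrow> ('x \<Rightarrow> 'x) \<Rightarrow> ('y \<Rightarrow> 'y) \<Rightarrow> bool" where
  "hom_assoc_tensor_alg sX sY M f g \<longleftrightarrow>
     (let T = (\<lambda>xs. map (\<lambda>(x,y). (f x, g y)) xs) in
       (\<forall>xs xs' ys ys'. teq2 sX sY xs xs' \<longrightarrow> teq2 sX sY ys ys' \<longrightarrow> teq2 sX sY (M xs ys) (M xs' ys'))
     \<and> (\<forall>xs xs'. teq2 sX sY xs xs' \<longrightarrow> teq2 sX sY (T xs) (T xs'))
     \<and> (\<forall>xs ys. teq2 sX sY (T (M xs ys)) (M (T xs) (T ys)))
     \<and> (\<forall>xs ys zs. teq2 sX sY (M (T xs) (M ys zs)) (M (M xs ys) (T zs))))"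

definition smash_R :: "('h \<Rightarrow> ('h \<times> 'h) list) \<Rightarrow> ('h \<Rightarrow> 'h) \<Rightarrow> ('a \<Rightarrow> 'a) \<Rightarrow> ('h \<Rightarrow> 'a \<Rightarrow> 'a)
    \<Rightarrow> 'h \<Rightarrow> 'a \<Rightarrow> ('a \<times> 'h) list" where
  "smash_R \<Delta> \<alpha>H \<alpha>A act h a =
     [(act (inv \<alpha>H (inv \<alpha>H x)) (inv \<alpha>A a), inv \<alpha>H y). (x,y) \<leftarrow> \<Delta> h]"

end

theory Submission
  imports Defs
begin

section \<open>Generic sums over pair lists\<close>

definition sp :: "('x \<Rightarrow> 'y \<Rightarrow> 'c::comm_monoid_add) \<Rightarrow> ('x \<times> 'y) list \<Rightarrow> 'c" where
  "sp f xs = sum_list (map (\<lambda>(x,y). f x y) xs)"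

lemma sp_Nil[simp]: "sp f [] = 0" by (simp add: sp_def)
lemma sp_Cons[simp]: "sp f (p # xs) = f (fst p) (snd p) + sp f xs"
  by (cases p) (simp add: sp_def)
lemma sp_append[simp]: "sp f (xs @ ys) = sp f xs + sp f ys"
  by (simp add: sp_def)

lemma sp_map[simp]: "sp f (map (\<lambda>(x,y). (g x y, h x y)) xs) = sp (\<lambda>x y. f (g x y) (h x y)) xs"
  by (induct xs) auto

lemma sp_concat[simp]: "sp f (concat (map (\<lambda>(x,y). F x y) xs)) = sp (\<lambda>x y. sp f (F x y)) xs"
  by (induct xs) auto

lemma sp_cong: "(\<And>x y. f x y = g x y) \<Longrightarrow> sp f xs = sp g xs"
proof -
  assume "\<And>x y. f x y = g x y"
  then have "f = g" by (intro ext)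
  then show ?thesis by simp
qed

lemma sp_add: "sp (\<lambda>x y. f x y + g x y) xs = sp f xs + sp g xs"
  by (induct xs) (auto simp: algebra_simps)

lemma sp_cmult: "sp (\<lambda>x y. (c::'c::semiring_0) * f x y) xs = c * sp f xs"
  by (induct xs) (auto simp: algebra_simps)

lemma sp_lin[simp]: "sp (\<lambda>x y. (c::'c::semiring_0) * f x y + g x y) xs = c * sp f xs + sp g xs"
  by (simp add: sp_add sp_cmult)

lemma sp_swap: "sp (\<lambda>x y. sp (\<lambda>u v. F x y u v) ys) xs = sp (\<lambda>u v. sp (\<lambda>x y. F x y u v) xs) ys"
proof (induct xs)
  case Nil
  then show ?case by (induct ys) auto
next
  case (Cons p xs)
  then show ?case by (simp add: sp_add)
qed

lemma teq2_sp: "teq2 sX sY xs ys \<longleftrightarrow> (\<forall>\<phi>. bilin sX sY (*) \<phi> \<longrightarrow> sp \<phi> xs = sp \<phi> ys)"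
  unfolding teq2_def sp_def by simp

section \<open>Linear maps\<close>

lemma lin_eq: "lin s t f \<Longrightarrow> f (s c x + x') = t c (f x) + f x'"
  unfolding lin_def by blast

lemma lin_add:
  assumes "vector_space s" "vector_space t" "lin s t f"
  shows "f (x + y) = f x + f y"
proof -
  have "f (s 1 x + y) = t 1 (f x) + f y" using assms(3) by (rule lin_eq)
  moreover have "s 1 x = x" using assms(1) unfolding vector_space_def by blast
  moreover have "t 1 (f x) = f x" using assms(2) unfolding vector_space_def by blast
  ultimately show ?thesis by simp
qed

lemma lin_zero:
  assumes "vector_space s" "vector_space t" "lin s t f"
  shows "f 0 = 0"
proof -
  have "f (0 + 0) = f 0 + f 0" by (rule lin_add[OF assms])
  then show ?thesis by simp
qed

lemma lin_scale:
  assumes "vector_space s" "vector_space t" "lin s t f"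
  shows "f (s c x) = t c (f x)"
proof -
  have "f (s c x + 0) = t c (f x) + f 0" using assms(3) by (rule lin_eq)
  then show ?thesis using lin_zero[OF assms] by simp
qed

lemma vs_field: "vector_space ((*) :: 'k::field \<Rightarrow> 'k \<Rightarrow> 'k)"
  unfolding vector_space_def by (simp add: algebra_simps)

lemma lin_sp_push:
  assumes "vector_space s" "lin s ((*)::'k::field\<Rightarrow>_) f"
  shows "f (sp F xs) = sp (\<lambda>x y. f (F x y)) xs"
proof (induct xs)
  case Nil
  then show ?case using lin_zero[OF assms(1) vs_field assms(2)] by simp
next
  case (Cons p xs)
  then show ?case using lin_add[OF assms(1) vs_field assms(2)] by simp
qed

lemma lin_inv:
  assumes "lin s s f" "bij f"
  shows "lin s s (inv f)"
  unfolding lin_def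
proof (intro allI)
  fix c x x'
  have i: "inv f (f z) = z" for z using assms(2) by (simp add: bij_is_inj)
  have su: "f (inv f z) = z" for z using assms(2) by (simp add: bij_is_surj surj_f_inv_f)
  have "f (s c (inv f x) + inv f x') = s c x + x'" using lin_eq[OF assms(1)] su by simp
  then have "inv f (s c x + x') = inv f (f (s c (inv f x) + inv f x'))" by simp
  then show "inv f (s c x + x') = s c (inv f x) + inv f x'" using i by simp
qed

lemma bl1: "bilin s1 s2 s3 f \<Longrightarrow> f (s1 c x + x') y = s3 c (f x y) + f x' y"
  unfolding bilin_def lin_def by blast
lemma bl2: "bilin s1 s2 s3 f \<Longrightarrow> f y (s2 c x + x') = s3 c (f y x) + f y x'"
  unfolding bilin_def lin_def by blast


section \<open>The smash product setting\<close>

locale smash =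
  fixes sH :: "'k::field \<Rightarrow> 'h::ab_group_add \<Rightarrow> 'h"
    and mH :: "'h \<Rightarrow> 'h \<Rightarrow> 'h" and D :: "'h \<Rightarrow> ('h \<times> 'h) list" and aH :: "'h \<Rightarrow> 'h"
    and sA :: "'k \<Rightarrow> 'a::ab_group_add \<Rightarrow> 'a"
    and mA :: "'a \<Rightarrow> 'a \<Rightarrow> 'a" and aA :: "'a \<Rightarrow> 'a" and act :: "'h \<Rightarrow> 'a \<Rightarrow> 'a"
  assumes hb: "hom_bialg sH mH D aH"
    and mh: "module_hom_alg sH mH D aH sA mA aA act"
    and bH: "bij aH" and bA: "bij aA"
begin

abbreviation "iH \<equiv> inv aH"
abbreviation "iA \<equiv> inv aA"
abbreviation "R \<equiv> smash_R D aH aA act"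

lemma vsH: "vector_space sH" using hb unfolding hom_bialg_def hom_assoc_alg_def by blast
lemma vsA: "vector_space sA" using mh unfolding module_hom_alg_def hom_assoc_alg_def by blast
lemma bmH: "bilin sH sH sH mH" using hb unfolding hom_bialg_def hom_assoc_alg_def by blast
lemma bmA: "bilin sA sA sA mA" using mh unfolding module_hom_alg_def hom_assoc_alg_def by blast
lemma laH: "lin sH sH aH" using hb unfolding hom_bialg_def hom_assoc_alg_def by blast
lemma laA: "lin sA sA aA" using mh unfolding module_hom_alg_def hom_assoc_alg_def by blast
lemma bact: "bilin sH sA sA act" using mh unfolding module_hom_alg_def by blast
lemma aH_mult[simp]: "aH (mH x y) = mH (aH x) (aH y)"
  using hb unfolding hom_bialg_def hom_assoc_alg_def by blast
lemma aA_mult[simp]: "aA (mA x y) = mA (aA x) (aA y)"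
  using mh unfolding module_hom_alg_def hom_assoc_alg_def by blast
lemma assH[simp]: "mH (aH x) (mH y z) = mH (mH x y) (aH z)"
  using hb unfolding hom_bialg_def hom_assoc_alg_def by blast
lemma assA[simp]: "mA (aA x) (mA y z) = mA (mA x y) (aA z)"
  using mh unfolding module_hom_alg_def hom_assoc_alg_def by blast
lemma D_lin: "teq2 sH sH (D (sH c h + h')) (tscale sH c (D h) @ D h')"
  using hb unfolding hom_bialg_def by blast
lemma D_coass: "teq3 sH sH sH [(u, v, aH y). (x,y) \<leftarrow> D h, (u,v) \<leftarrow> D x]
                      [(aH x, u, v). (x,y) \<leftarrow> D h, (u,v) \<leftarrow> D y]"
  using hb unfolding hom_bialg_def by blast
lemma D_mult: "teq2 sH sH (D (mH h h')) [(mH x x', mH y y'). (x,y) \<leftarrow> D h, (x',y') \<leftarrow> D h']"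
  using hb unfolding hom_bialg_def by blast
lemma D_alpha: "teq2 sH sH (D (aH h)) [(aH x, aH y). (x,y) \<leftarrow> D h]"
  using hb unfolding hom_bialg_def by blast
lemma act_alpha: "aA (act h a) = act (aH h) (aA a)"
  using mh unfolding module_hom_alg_def by blast
lemma act_mult: "act (aH h) (act h' a) = act (mH h h') (aA a)"
  using mh unfolding module_hom_alg_def by blast
lemma act_prod: "act (aH (aH h)) (mA a a') = sp (\<lambda>x y. mA (act x a) (act y a')) (D h)"
  using mh unfolding module_hom_alg_def sp_def by blast

lemma iH1[simp]: "iH (aH x) = x" using bH by (simp add: bij_is_inj)
lemma iH2[simp]: "aH (iH x) = x" using bH by (simp add: bij_is_surj surj_f_inv_f)
lemma iA1[simp]: "iA (aA x) = x" using bA by (simp add: bij_is_inj)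
lemma iA2[simp]: "aA (iA x) = x" using bA by (simp add: bij_is_surj surj_f_inv_f)
lemma liH: "lin sH sH iH" by (rule lin_inv[OF laH bH])
lemma liA: "lin sA sA iA" by (rule lin_inv[OF laA bA])
lemma iH_mult[simp]: "iH (mH x y) = mH (iH x) (iH y)"
proof -
  have "iH (mH x y) = iH (aH (mH (iH x) (iH y)))" by simp
  then show ?thesis by (simp only: iH1)
qed
lemma iA_mult[simp]: "iA (mA x y) = mA (iA x) (iA y)"
proof -
  have "iA (mA x y) = iA (aA (mA (iA x) (iA y)))" by simp
  then show ?thesis by (simp only: iA1)
qed
lemma act_mult': "act (mH p q) a = act (aH p) (act q (iA a))"
  using act_mult[of p q "iA a"] by simp

lemmas linr = lin_eq[OF laH] lin_eq[OF laA] lin_eq[OF liH] lin_eq[OF liA]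
  bl1[OF bmH] bl2[OF bmH] bl1[OF bmA] bl2[OF bmA] bl1[OF bact] bl2[OF bact]

lemma scl: "bilin s1 s2 (*) f \<Longrightarrow> vector_space s1 \<Longrightarrow> f (s1 c x) y = c * f x y"
  using lin_scale[OF _ vs_field, of s1 "\<lambda>x. f x y"] unfolding bilin_def by blast

lemma pushl: "bilin s1 s2 (*) f \<Longrightarrow> vector_space s1 \<Longrightarrow> f (sp F xs) y = sp (\<lambda>u v. f (F u v) y) xs"
  using lin_sp_push[of s1 "\<lambda>x. f x y"] unfolding bilin_def by blast

lemma Dsp_alpha: "bilin sH sH (*) \<psi> \<Longrightarrow> sp \<psi> (D (aH h)) = sp (\<lambda>x y. \<psi> (aH x) (aH y)) (D h)"
  using D_alpha[of h] unfolding teq2_sp by simp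

lemma Dsp_inv: assumes "bilin sH sH (*) \<psi>"
  shows "sp \<psi> (D (iH h)) = sp (\<lambda>x y. \<psi> (iH x) (iH y)) (D h)"
proof -
  have b: "bilin sH sH (*) (\<lambda>x y. \<psi> (iH x) (iH y))"
    unfolding bilin_def lin_def by (simp add: linr bl1[OF assms] bl2[OF assms])
  have "sp (\<lambda>x y. \<psi> (iH x) (iH y)) (D (aH (iH h))) = sp (\<lambda>x y. \<psi> (iH (aH x)) (iH (aH y))) (D (iH h))"
    by (rule Dsp_alpha[OF b])
  then show ?thesis by simp
qed

lemma Dsp_lin: assumes "bilin sH sH (*) \<psi>"
  shows "sp \<psi> (D (sH c h + h')) = c * sp \<psi> (D h) + sp \<psi> (D h')"
proof -
  have "sp \<psi> (D (sH c h + h')) = sp \<psi> (tscale sH c (D h) @ D h')"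
    using D_lin[of c h h'] assms unfolding teq2_sp by blast
  also have "\<dots> = c * sp \<psi> (D h) + sp \<psi> (D h')"
    by (simp add: tscale_def scl[OF assms vsH] sp_cmult)
  finally show ?thesis .
qed

lemma Dsp_mult: assumes "bilin sH sH (*) \<psi>"
  shows "sp \<psi> (D (mH h h')) = sp (\<lambda>x y. sp (\<lambda>x' y'. \<psi> (mH x x') (mH y y')) (D h')) (D h)"
  using D_mult[of h h'] assms unfolding teq2_sp by simp

lemma Dsp_coass: assumes "trilin sH sH sH \<Phi>"
  shows "sp (\<lambda>x y. sp (\<lambda>u v. \<Phi> u v (aH y)) (D x)) (D h) = sp (\<lambda>x y. sp (\<lambda>u v. \<Phi> (aH x) u v) (D y)) (D h)"
proof -
  have e: "sum_list (map (\<lambda>(x,y,z). \<Phi> x y z) (concat (map (\<lambda>(x,y). map (\<lambda>(u,v). (f x y u v, g x y u v, k x y u v)) (F x y)) xs)))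
      = sp (\<lambda>x y. sp (\<lambda>u v. \<Phi> (f x y u v) (g x y u v) (k x y u v)) (F x y)) xs" for f g k F xs
  proof (induct xs)
    case Nil then show ?case by simp
  next
    case (Cons p xs)
    have "sum_list (map (\<lambda>(x,y,z). \<Phi> x y z) (map (\<lambda>(u,v). (f a b u v, g a b u v, k a b u v)) L))
        = sp (\<lambda>u v. \<Phi> (f a b u v) (g a b u v) (k a b u v)) L" for a b L
      by (induct L) auto
    then show ?case using Cons by (cases p) simp
  qed
  have q: "sum_list (map (\<lambda>(x,y,z). \<Phi> x y z) [(u, v, aH y). (x,y) \<leftarrow> D h, (u,v) \<leftarrow> D x])
     = sum_list (map (\<lambda>(x,y,z). \<Phi> x y z) [(aH x, u, v). (x,y) \<leftarrow> D h, (u,v) \<leftarrow> D y])"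
    using D_coass[of h] assms unfolding teq3_def by blast
  have l: "sum_list (map (\<lambda>(x,y,z). \<Phi> x y z) [(u, v, aH y). (x,y) \<leftarrow> D h, (u,v) \<leftarrow> D x])
     = sp (\<lambda>x y. sp (\<lambda>u v. \<Phi> u v (aH y)) (D x)) (D h)"
    by (rule e[of "\<lambda>x y u v. u" "\<lambda>x y u v. v" "\<lambda>x y u v. aH y" "\<lambda>x y. D x" "D h"])
  have r: "sum_list (map (\<lambda>(x,y,z). \<Phi> x y z) [(aH x, u, v). (x,y) \<leftarrow> D h, (u,v) \<leftarrow> D y])
     = sp (\<lambda>x y. sp (\<lambda>u v. \<Phi> (aH x) u v) (D y)) (D h)"
    by (rule e[of "\<lambda>x y u v. aH x" "\<lambda>x y u v. u" "\<lambda>x y u v. v" "\<lambda>x y. D y" "D h"])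
  show ?thesis using q l r by simp
qed

end


context smash begin

lemma R_sp: "sp \<chi> (R b a) = sp (\<lambda>x y. \<chi> (act (iH (iH x)) (iA a)) (iH y)) (D b)"
  by (simp add: smash_R_def)

lemma Dsp_inv3: assumes "bilin sH sH (*) \<psi>"
  shows "sp \<psi> (D (iH (iH (iH h)))) = sp (\<lambda>x y. \<psi> (iH (iH (iH x))) (iH (iH (iH y)))) (D h)"
proof -
  have b1: "bilin sH sH (*) (\<lambda>x y. \<psi> (iH x) (iH y))"
    unfolding bilin_def lin_def by (simp add: linr bl1[OF assms] bl2[OF assms])
  have b2: "bilin sH sH (*) (\<lambda>x y. \<psi> (iH (iH x)) (iH (iH y)))"
    unfolding bilin_def lin_def by (simp add: linr bl1[OF assms] bl2[OF assms])
  show ?thesis by (simp add: Dsp_inv[OF assms] Dsp_inv[OF b1] Dsp_inv[OF b2])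
qed

lemma R_lin1: assumes "bilin sA sH (*) \<chi>"
  shows "sp \<chi> (R (sH c b + b') a) = c * sp \<chi> (R b a) + sp \<chi> (R b' a)"
proof -
  have b: "bilin sH sH (*) (\<lambda>x y. \<chi> (act (iH (iH x)) (iA a)) (iH y))"
    unfolding bilin_def lin_def by (simp add: linr bl1[OF assms] bl2[OF assms])
  show ?thesis by (simp only: R_sp Dsp_lin[OF b])
qed

lemma R_lin2: assumes "bilin sA sH (*) \<chi>"
  shows "sp \<chi> (R b (sA c a + a')) = c * sp \<chi> (R b a) + sp \<chi> (R b a')"
  by (simp add: R_sp linr bl1[OF assms] bl2[OF assms])

lemma R_alpha: assumes "bilin sA sH (*) \<chi>"
  shows "sp \<chi> (R (aH b) (aA a)) = sp (\<lambda>x y. \<chi> (aA x) (aH y)) (R b a)"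
proof -
  have b: "bilin sH sH (*) (\<lambda>x y. \<chi> (act (iH (iH x)) a) (iH y))"
    unfolding bilin_def lin_def by (simp add: linr bl1[OF assms] bl2[OF assms])
  have "sp \<chi> (R (aH b) (aA a)) = sp (\<lambda>x y. \<chi> (act (iH (iH x)) a) (iH y)) (D (aH b))"
    by (simp add: R_sp)
  also have "\<dots> = sp (\<lambda>x y. \<chi> (act (iH x) a) y) (D b)"
    by (simp add: Dsp_alpha[OF b])
  also have "\<dots> = sp (\<lambda>x y. \<chi> (aA x) (aH y)) (R b a)"
    by (simp add: R_sp act_alpha)
  finally show ?thesis .
qed

lemma R_four: assumes "bilin sA sH (*) \<chi>"
  shows "sp \<chi> (R (aH b) (mA a a')) = sp (\<lambda>x y. sp (\<lambda>u v. \<chi> (mA x u) (aH v)) (R y a')) (R b a)"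
proof -
  define \<Phi> where "\<Phi> = (\<lambda>p q r. \<chi> (mA (act (iH (iH (iH p))) (iA a)) (act (iH (iH (iH q))) (iA a'))) (iH r))"
  have tri: "trilin sH sH sH \<Phi>"
    unfolding trilin_def lin_def \<Phi>_def by (simp add: linr bl1[OF assms] bl2[OF assms])
  have b1: "bilin sH sH (*) (\<lambda>x y. \<chi> (act (iH (iH x)) (mA (iA a) (iA a'))) (iH y))"
    unfolding bilin_def lin_def by (simp add: linr bl1[OF assms] bl2[OF assms])
  have "sp \<chi> (R (aH b) (mA a a')) = sp (\<lambda>x y. \<chi> (act (iH (iH x)) (mA (iA a) (iA a'))) (iH y)) (D (aH b))"
    by (simp add: R_sp)
  also have "\<dots> = sp (\<lambda>x y. \<chi> (act (iH x) (mA (iA a) (iA a'))) y) (D b)"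
    by (simp add: Dsp_alpha[OF b1])
  also have "\<dots> = sp (\<lambda>x y. sp (\<lambda>p q. \<Phi> p q (aH y)) (D x)) (D b)"
  proof (rule sp_cong)
    fix x y
    have b2: "bilin sH sH (*) (\<lambda>p q. \<chi> (mA (act p (iA a)) (act q (iA a'))) y)"
      unfolding bilin_def lin_def by (simp add: linr bl1[OF assms] bl2[OF assms])
    have "act (iH x) (mA (iA a) (iA a')) = act (aH (aH (iH (iH (iH x))))) (mA (iA a) (iA a'))"
      by simp
    also have "\<dots> = sp (\<lambda>p q. mA (act p (iA a)) (act q (iA a'))) (D (iH (iH (iH x))))"
      by (rule act_prod)
    finally have "\<chi> (act (iH x) (mA (iA a) (iA a'))) y
        = \<chi> (sp (\<lambda>p q. mA (act p (iA a)) (act q (iA a'))) (D (iH (iH (iH x))))) y" by simp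
    also have "\<dots> = sp (\<lambda>p q. \<chi> (mA (act p (iA a)) (act q (iA a'))) y) (D (iH (iH (iH x))))"
      by (rule pushl[OF assms vsA])
    also have "\<dots> = sp (\<lambda>p q. \<Phi> p q (aH y)) (D x)"
      by (simp add: Dsp_inv3[OF b2] \<Phi>_def)
    finally show "\<chi> (act (iH x) (mA (iA a) (iA a'))) y = sp (\<lambda>p q. \<Phi> p q (aH y)) (D x)" .
  qed
  also have "\<dots> = sp (\<lambda>x y. sp (\<lambda>u v. \<Phi> (aH x) u v) (D y)) (D b)"
    by (rule Dsp_coass[OF tri])
  also have "\<dots> = sp (\<lambda>x y. sp (\<lambda>u v. \<chi> (mA x u) (aH v)) (R y a')) (R b a)"
  proof -
    have "sp (\<lambda>x y. sp (\<lambda>u v. \<chi> (mA x u) (aH v)) (R y a')) (R b a)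
      = sp (\<lambda>x y. sp (\<lambda>u v. \<chi> (mA (act (iH (iH x)) (iA a)) u) (aH v)) (R (iH y) a')) (D b)"
      by (simp only: R_sp[of _ b a])
    also have "\<dots> = sp (\<lambda>x y. sp (\<lambda>u v. \<Phi> (aH x) u v) (D y)) (D b)"
    proof (rule sp_cong)
      fix x y
      have b3: "bilin sH sH (*) (\<lambda>u v. \<chi> (mA (act (iH (iH x)) (iA a)) (act (iH (iH u)) (iA a'))) (aH (iH v)))"
        unfolding bilin_def lin_def by (simp add: linr bl1[OF assms] bl2[OF assms])
      show "sp (\<lambda>u v. \<chi> (mA (act (iH (iH x)) (iA a)) u) (aH v)) (R (iH y) a') = sp (\<lambda>u v. \<Phi> (aH x) u v) (D y)"
        by (simp only: R_sp Dsp_inv[OF b3]) (simp add: \<Phi>_def)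
    qed
    finally show ?thesis by simp
  qed
  finally show ?thesis .
qed

lemma R_five: assumes "bilin sA sH (*) \<chi>"
  shows "sp \<chi> (R (mH b b') (aA a)) = sp (\<lambda>u v. sp (\<lambda>x y. \<chi> (aA x) (mH y v)) (R b u)) (R b' a)"
proof -
  define G where "G = (\<lambda>x y x' y'. \<chi> (act (iH x) (act (iH (iH x')) (iA a))) (mH (iH y) (iH y')))"
  have b1: "bilin sH sH (*) (\<lambda>x y. \<chi> (act (iH (iH x)) a) (iH y))"
    unfolding bilin_def lin_def by (simp add: linr bl1[OF assms] bl2[OF assms])
  have "sp \<chi> (R (mH b b') (aA a)) = sp (\<lambda>x y. \<chi> (act (iH (iH x)) a) (iH y)) (D (mH b b'))"
    by (simp add: R_sp)
  also have "\<dots> = sp (\<lambda>x y. sp (\<lambda>x' y'. \<chi> (act (iH (iH (mH x x'))) a) (iH (mH y y'))) (D b')) (D b)"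
    by (rule Dsp_mult[OF b1])
  also have "\<dots> = sp (\<lambda>x y. sp (\<lambda>x' y'. G x y x' y') (D b')) (D b)"
    by (simp add: act_mult' G_def)
  also have "\<dots> = sp (\<lambda>x' y'. sp (\<lambda>x y. G x y x' y') (D b)) (D b')"
    by (rule sp_swap)
  also have "\<dots> = sp (\<lambda>u v. sp (\<lambda>x y. \<chi> (aA x) (mH y v)) (R b u)) (R b' a)"
    by (simp add: R_sp act_alpha G_def)
  finally show ?thesis .
qed

lemma twist: "hom_twisting sA mA aA sH mH aH R"
  unfolding hom_twisting_def teq2_sp
proof (intro conjI allI impI)
  fix \<phi> :: "'a \<Rightarrow> 'h \<Rightarrow> 'k" assume p: "bilin sA sH (*) \<phi>"
  {
    fix c b b' a
    show "sp \<phi> (R (sH c b + b') a) = sp \<phi> (tscale sA c (R b a) @ R b' a)"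
      by (simp add: R_lin1[OF p] tscale_def scl[OF p vsA] sp_cmult)
  next
    fix c b a a'
    show "sp \<phi> (R b (sA c a + a')) = sp \<phi> (tscale sA c (R b a) @ R b a')"
      by (simp add: R_lin2[OF p] tscale_def scl[OF p vsA] sp_cmult)
  next
    fix b a
    show "sp \<phi> (map (\<lambda>(x, y). (aA x, aH y)) (R b a)) = sp \<phi> (R (aH b) (aA a))"
      by (simp add: R_alpha[OF p])
  next
    fix b a a'
    show "sp \<phi> (R (aH b) (mA a a')) = sp \<phi> (concat (map (\<lambda>(x, y). map (\<lambda>(u, v). (mA x u, aH v)) (R y a')) (R b a)))"
      by (simp add: R_four[OF p])
  next
    fix b b' a
    show "sp \<phi> (R (mH b b') (aA a)) = sp \<phi> (concat (map (\<lambda>(u, v). map (\<lambda>(x, y). (aA x, mH y v)) (R b u)) (R b' a)))"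
      by (simp add: R_five[OF p])
  }
qed

end


lemma TM_sp: "sp \<phi> (twisted_mult mA mB R xs ys)
  = sp (\<lambda>a b. sp (\<lambda>a' b'. sp (\<lambda>x y. \<phi> (mA a x) (mB y b')) (R b a')) ys) xs"
  by (simp add: twisted_mult_def)

context smash begin

abbreviation "M \<equiv> twisted_mult mA mH R"

lemma M_wd: assumes "teq2 sA sH xs xs'" "teq2 sA sH ys ys'"
  shows "teq2 sA sH (M xs ys) (M xs' ys')"
  unfolding teq2_sp
proof (intro allI impI)
  fix \<phi> :: "'a \<Rightarrow> 'h \<Rightarrow> 'k" assume p: "bilin sA sH (*) \<phi>"
  have bc: "bilin sA sH (*) (\<lambda>x y. \<phi> (mA a x) (mH y b'))" for a b'
    unfolding bilin_def lin_def by (simp add: linr bl1[OF p] bl2[OF p])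
  define \<Psi> where "\<Psi> = (\<lambda>a b. sp (\<lambda>a' b'. sp (\<lambda>x y. \<phi> (mA a x) (mH y b')) (R b a')) ys)"
  define \<Theta> where "\<Theta> = (\<lambda>a' b'. sp (\<lambda>a b. sp (\<lambda>x y. \<phi> (mA a x) (mH y b')) (R b a')) xs')"
  have bP: "bilin sA sH (*) \<Psi>"
    unfolding bilin_def lin_def
  proof (intro conjI allI)
    fix b c a a2
    show "\<Psi> (sA c a + a2) b = c * \<Psi> a b + \<Psi> a2 b"
      unfolding \<Psi>_def by (simp add: linr bl1[OF p] bl2[OF p])
  next
    fix a c b b2
    show "\<Psi> a (sH c b + b2) = c * \<Psi> a b + \<Psi> a b2"
      unfolding \<Psi>_def by (simp add: R_lin1[OF bc])
  qed
  have bT: "bilin sA sH (*) \<Theta>"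
    unfolding bilin_def lin_def
  proof (intro conjI allI)
    fix b c a a2
    show "\<Theta> (sA c a + a2) b = c * \<Theta> a b + \<Theta> a2 b"
      unfolding \<Theta>_def by (simp add: R_lin2[OF bc])
  next
    fix a c b b2
    show "\<Theta> a (sH c b + b2) = c * \<Theta> a b + \<Theta> a b2"
      unfolding \<Theta>_def by (simp add: linr bl1[OF p] bl2[OF p])
  qed
  have "sp \<phi> (M xs ys) = sp \<Psi> xs" by (simp add: TM_sp \<Psi>_def)
  also have "\<dots> = sp \<Psi> xs'" using assms(1) bP unfolding teq2_sp by blast
  also have "\<dots> = sp \<Theta> ys" unfolding \<Psi>_def \<Theta>_def by (rule sp_swap)
  also have "\<dots> = sp \<Theta> ys'" using assms(2) bT unfolding teq2_sp by blast
  also have "\<dots> = sp \<phi> (M xs' ys')" unfolding \<Theta>_def TM_sp by (rule sp_swap[symmetric])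
  finally show "sp \<phi> (M xs ys) = sp \<phi> (M xs' ys')" .
qed

lemma T_wd: assumes "teq2 sA sH xs xs'"
  shows "teq2 sA sH (map (\<lambda>(x,y). (aA x, aH y)) xs) (map (\<lambda>(x,y). (aA x, aH y)) xs')"
  unfolding teq2_sp
proof (intro allI impI)
  fix \<phi> :: "'a \<Rightarrow> 'h \<Rightarrow> 'k" assume p: "bilin sA sH (*) \<phi>"
  have b: "bilin sA sH (*) (\<lambda>x y. \<phi> (aA x) (aH y))"
    unfolding bilin_def lin_def by (simp add: linr bl1[OF p] bl2[OF p])
  show "sp \<phi> (map (\<lambda>(x,y). (aA x, aH y)) xs) = sp \<phi> (map (\<lambda>(x,y). (aA x, aH y)) xs')"
    using assms b unfolding teq2_sp by simp
qed

lemma T_mult: "teq2 sA sH (map (\<lambda>(x,y). (aA x, aH y)) (M xs ys))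
     (M (map (\<lambda>(x,y). (aA x, aH y)) xs) (map (\<lambda>(x,y). (aA x, aH y)) ys))"
  unfolding teq2_sp
proof (intro allI impI)
  fix \<phi> :: "'a \<Rightarrow> 'h \<Rightarrow> 'k" assume p: "bilin sA sH (*) \<phi>"
  have bc: "bilin sA sH (*) (\<lambda>x y. \<phi> (mA (aA a) x) (mH y (aH b')))" for a b'
    unfolding bilin_def lin_def by (simp add: linr bl1[OF p] bl2[OF p])
  show "sp \<phi> (map (\<lambda>(x,y). (aA x, aH y)) (M xs ys)) =
      sp \<phi> (M (map (\<lambda>(x,y). (aA x, aH y)) xs) (map (\<lambda>(x,y). (aA x, aH y)) ys))"
    by (simp add: TM_sp R_alpha[OF bc])
qed

lemma M_assoc: "teq2 sA sH (M (map (\<lambda>(x,y). (aA x, aH y)) xs) (M ys zs))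
     (M (M xs ys) (map (\<lambda>(x,y). (aA x, aH y)) zs))"
  unfolding teq2_sp
proof (intro allI impI)
  fix \<phi> :: "'a \<Rightarrow> 'h \<Rightarrow> 'k" assume p: "bilin sA sH (*) \<phi>"
  have b4: "bilin sA sH (*) (\<lambda>u v. \<phi> (mA (aA a) u) (mH v (mH y b2)))" for a y b2
    unfolding bilin_def lin_def by (simp add: linr bl1[OF p] bl2[OF p])
  have b5: "bilin sA sH (*) (\<lambda>u v. \<phi> (mA (mA a x1) u) (mH v (aH b2)))" for a x1 b2
    unfolding bilin_def lin_def by (simp add: linr bl1[OF p] bl2[OF p])
  define F where "F = (\<lambda>a x1 u v y b2. \<phi> (mA (mA a x1) (aA u)) (mH (mH v y) (aH b2)))"
  have "sp \<phi> (M (map (\<lambda>(x,y). (aA x, aH y)) xs) (M ys zs))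
    = sp (\<lambda>a b. sp (\<lambda>a1 b1. sp (\<lambda>a2 b2. sp (\<lambda>x y.
         sp (\<lambda>x1 y1. sp (\<lambda>u v. F a x1 u v y b2) (R y1 x)) (R b a1)) (R b1 a2)) zs) ys) xs"
    by (simp add: TM_sp R_four[OF b4] F_def)
  also have "\<dots> = sp (\<lambda>a b. sp (\<lambda>a1 b1. sp (\<lambda>x1 y1. sp (\<lambda>a2 b2. sp (\<lambda>x y.
         sp (\<lambda>u v. F a x1 u v y b2) (R y1 x)) (R b1 a2)) zs) (R b a1)) ys) xs"
  proof (intro sp_cong)
    fix a b a1 b1
    have "sp (\<lambda>a2 b2. sp (\<lambda>x y. sp (\<lambda>x1 y1. sp (\<lambda>u v. F a x1 u v y b2) (R y1 x)) (R b a1)) (R b1 a2)) zs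
       = sp (\<lambda>a2 b2. sp (\<lambda>x1 y1. sp (\<lambda>x y. sp (\<lambda>u v. F a x1 u v y b2) (R y1 x)) (R b1 a2)) (R b a1)) zs"
      by (intro sp_cong sp_swap)
    also have "\<dots> = sp (\<lambda>x1 y1. sp (\<lambda>a2 b2. sp (\<lambda>x y. sp (\<lambda>u v. F a x1 u v y b2) (R y1 x)) (R b1 a2)) zs) (R b a1)"
      by (rule sp_swap)
    finally show "sp (\<lambda>a2 b2. sp (\<lambda>x y. sp (\<lambda>x1 y1. sp (\<lambda>u v. F a x1 u v y b2) (R y1 x)) (R b a1)) (R b1 a2)) zs
       = sp (\<lambda>x1 y1. sp (\<lambda>a2 b2. sp (\<lambda>x y. sp (\<lambda>u v. F a x1 u v y b2) (R y1 x)) (R b1 a2)) zs) (R b a1)" .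
  qed
  also have "\<dots> = sp \<phi> (M (M xs ys) (map (\<lambda>(x,y). (aA x, aH y)) zs))"
    by (simp add: TM_sp R_five[OF b5] F_def)
  finally show "sp \<phi> (M (map (\<lambda>(x,y). (aA x, aH y)) xs) (M ys zs)) =
      sp \<phi> (M (M xs ys) (map (\<lambda>(x,y). (aA x, aH y)) zs))" .
qed

lemma tensor_alg: "hom_assoc_tensor_alg sA sH M aA aH"
  unfolding hom_assoc_tensor_alg_def Let_def
  using M_wd T_wd T_mult M_assoc by blast

end

theorem theorem3p1:
  fixes sH :: "'k::field \<Rightarrow> 'h::ab_group_add \<Rightarrow> 'h"
    and mH :: "'h \<Rightarrow> 'h \<Rightarrow> 'h" and \<Delta>H :: "'h \<Rightarrow> ('h \<times> 'h) list" and \<alpha>H :: "'h \<Rightarrow> 'h"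
    and sA :: "'k \<Rightarrow> 'a::ab_group_add \<Rightarrow> 'a"
    and mA :: "'a \<Rightarrow> 'a \<Rightarrow> 'a" and \<alpha>A :: "'a \<Rightarrow> 'a" and act :: "'h \<Rightarrow> 'a \<Rightarrow> 'a"
  assumes "hom_bialg sH mH \<Delta>H \<alpha>H"
    and "module_hom_alg sH mH \<Delta>H \<alpha>H sA mA \<alpha>A act"
    and "bij \<alpha>H" and "bij \<alpha>A"
  shows "hom_twisting sA mA \<alpha>A sH mH \<alpha>H (smash_R \<Delta>H \<alpha>H \<alpha>A act)
       \<and> hom_assoc_tensor_alg sA sH (twisted_mult mA mH (smash_R \<Delta>H \<alpha>H \<alpha>A act)) \<alpha>A \<alpha>H"
proof -
  interpret smash sH mH \<Delta>H \<alpha>H sA mA \<alpha>A act using assms by unfold_locales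
  show ?thesis using twist tensor_alg by blast
qed

end
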